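(* Assume $\lambda d(1-s^d_i)>\gamma$ for all $d,i$. For $x^*\in\mathcal{X}$, let $\Theta^*=\bar\Theta(x^* )>0$. Then $\partial H/\partial\Theta(\Theta^*,x^* )<0$, so there is an open neighborhood $N\subset\mathbb{R}^n$ of $x^*$ and a unique continuously differentiable $h:N\to(0,\infty)$ with $h(x^* )=\Theta^*$ and $H(h(y),y)=0$ for $y\in N$. Define $F^d_i(y)=s^d_i r-(1-s^d_i)\frac{\theta^d_i h(y)}{\gamma+\theta^d_i h(y)}$ on $N$. Then the game is submodular at $x^*$ in the sense that for all $d,c\in\{1,\dots,D\}$, all $k\in\{1,\dots,n^d-1\}$ and all $l\in\{1,\dots,n^c-1\}$, $$\frac{\partial F^d_{k+1}}{\partial x^c_{l+1}}(x^* )-\frac{\partial F^d_{k}}{\partial x^c_{l+1}}(x^* )-\frac{\partial F^d_{k+1}}{\partial x^c_{l}}(x^* )+\frac{\partial F^d_{k}}{\partial x^c_{l}}(x^* )\le 0,$$ i.e. $(\Sigma^d)^T DF^d_c(x^* )\Sigma^c\le0$ entrywise, where $DF^d_c=(\partial F^d_i/\partial x^c_j)_{i,j}\in\mathbb{R}^{n^d\times n^c}$ and $\Sigma^d\in\mathbb{R}^{n^d\times(n^d-1)}$ has columns $e_{k+1}-e_k$.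
   Context: Setting: $D\in\mathbb{N}_+$ populations indexed by degree $d\in\{1,\dots,D\}$, degree distribution $m^d\in(0,1]$, $\sum_d m^d=1$, $\bar d=\sum_d d\,m^d$. Population $d$ has strategies $0\le s^d_1<\dots<s^d_{n^d}\le1$ (strictly increasing), $n=\sum_d n^d$. A social state is $x=(x^d_i)$ with $x^d_i\ge0$, $\sum_i x^d_i=m^d$; $\mathcal{X}$ is the set of social states. Constants $\lambda>0,\gamma>0$, $\theta^d_i=\lambda d(1-s^d_i)$, relative reward $r<0$. Define $H:\mathbb{R}\times\mathbb{R}^n\to\mathbb{R}$ (where $\gamma+\theta^d_i\Theta\neq0$) by $H(\Theta,x)=\frac{1}{\bar d}\sum_d d\sum_i\frac{x^d_i\theta^d_i}{\gamma+\theta^d_i\Theta}-1$. For $x\in\mathcal{X}$, $\bar\Theta(x)$ denotes the unique $\Theta>0$ with $H(\Theta,x)=0$ (the link-infection probability at the positive steady state of the SI dynamics $\dot I^d_i=-\gamma I^d_i+\lambda(1-s^d_i)(1-I^d_i)d\Theta$, $\Theta=\bar d^{-1}\sum_d\sum_i dx^d_iI^d_i$), and the steady-state payoff is $F^d_i(x)=s^d_ir-(1-s^d_i)\frac{\theta^d_i\bar\Theta(x)}{\gamma+\theta^d_i\bar\Theta(x)}$. *)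

theory Defs
  imports "HOL-Analysis.Analysis"
begin

text \<open>The ambient space R^n is rendered as real^'i for a finite index
type 'i; the coordinate x^d_i of a vector x is x $ idx d i, where idx is a bijection
from the index set {(d,i). d in {1..D}, i in {1..n d}} onto UNIV.\<close>

definition dbar :: "nat \<Rightarrow> (nat \<Rightarrow> real) \<Rightarrow> real" where
  "dbar D m = (\<Sum>d=1..D. real d * m d)"

definition theta :: "real \<Rightarrow> (nat \<Rightarrow> nat \<Rightarrow> real) \<Rightarrow> nat \<Rightarrow> nat \<Rightarrow> real" where
  "theta lam s d i = lam * real d * (1 - s d i)"

definition Hfun :: "nat \<Rightarrow> (nat \<Rightarrow> real) \<Rightarrow> (nat \<Rightarrow> nat) \<Rightarrow> (nat \<Rightarrow> nat \<Rightarrow> real)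
    \<Rightarrow> real \<Rightarrow> real \<Rightarrow> (nat \<Rightarrow> nat \<Rightarrow> 'i::finite) \<Rightarrow> real \<Rightarrow> real ^ 'i \<Rightarrow> real" where
  "Hfun D m n s lam gam idx \<Theta> x =
     (1 / dbar D m) * (\<Sum>d=1..D. real d * (\<Sum>i=1..n d.
        x $ idx d i * theta lam s d i / (gam + theta lam s d i * \<Theta>))) - 1"

definition Theta_bar :: "nat \<Rightarrow> (nat \<Rightarrow> real) \<Rightarrow> (nat \<Rightarrow> nat) \<Rightarrow> (nat \<Rightarrow> nat \<Rightarrow> real)
    \<Rightarrow> real \<Rightarrow> real \<Rightarrow> (nat \<Rightarrow> nat \<Rightarrow> 'i::finite) \<Rightarrow> real ^ 'i \<Rightarrow> real" where
  "Theta_bar D m n s lam gam idx x = (THE \<Theta>. \<Theta> > 0 \<and> Hfun D m n s lam gam idx \<Theta> x = 0)"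

definition social_state :: "nat \<Rightarrow> (nat \<Rightarrow> real) \<Rightarrow> (nat \<Rightarrow> nat) \<Rightarrow> (nat \<Rightarrow> nat \<Rightarrow> 'i::finite)
    \<Rightarrow> real ^ 'i \<Rightarrow> bool" where
  "social_state D m n idx x \<longleftrightarrow>
     (\<forall>d\<in>{1..D}. (\<forall>i\<in>{1..n d}. x $ idx d i \<ge> 0) \<and> (\<Sum>i=1..n d. x $ idx d i) = m d)"

definition payoff :: "(nat \<Rightarrow> nat \<Rightarrow> real) \<Rightarrow> real \<Rightarrow> real \<Rightarrow> real \<Rightarrow> ('a \<Rightarrow> real)
    \<Rightarrow> nat \<Rightarrow> nat \<Rightarrow> 'a \<Rightarrow> real" where
  "payoff s r lam gam h d i y =
     s d i * r - (1 - s d i) * (theta lam s d i * h y / (gam + theta lam s d i * h y))"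

definition partial :: "(real ^ 'i \<Rightarrow> real) \<Rightarrow> real ^ 'i \<Rightarrow> 'i::finite \<Rightarrow> real" where
  "partial f x j = deriv (\<lambda>t. f (x + t *\<^sub>R axis j 1)) 0"

definition implicit_sol where
  "implicit_sol D m n s lam gam idx N xs Ts h \<longleftrightarrow>
     (\<exists>h'. (\<forall>y\<in>N. (h has_derivative blinfun_apply (h' y)) (at y)) \<and> continuous_on N h') \<and>
     (\<forall>y\<in>N. h y > 0) \<and> h xs = Ts \<and>
     (\<forall>y\<in>N. Hfun D m n s lam gam idx (h y) y = 0)"

end

theory Submission
  imports Defs
begin

locale S4 =
  fixes D :: nat and m :: "nat \<Rightarrow> real" and n :: "nat \<Rightarrow> nat"
    and s :: "nat \<Rightarrow> nat \<Rightarrow> real" and lam gam :: real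
    and idx :: "nat \<Rightarrow> nat \<Rightarrow> 'i::finite" and xs :: "real ^ 'i"
  assumes D_pos: "D \<ge> 1"
    and m_range: "\<forall>d\<in>{1..D}. 0 < m d \<and> m d \<le> 1"
    and n_pos: "\<forall>d\<in>{1..D}. n d \<ge> 1"
    and s_range: "\<forall>d\<in>{1..D}. \<forall>i\<in>{1..n d}. 0 \<le> s d i \<and> s d i \<le> 1"
    and lam_pos: "lam > 0" and gam_pos: "gam > 0"
    and hyp: "\<forall>d\<in>{1..D}. \<forall>i\<in>{1..n d}. lam * real d * (1 - s d i) > gam"
    and xs_state: "social_state D m n idx xs"
    and s_mono: "\<forall>d\<in>{1..D}. \<forall>i\<in>{1..n d}. \<forall>j\<in>{1..n d}. i < j \<longrightarrow> s d i < s d j"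
    and idx_bij: "bij_betw (\<lambda>(d, i). idx d i) {(d, i). d \<in> {1..D} \<and> i \<in> {1..n d}} UNIV"
begin

abbreviation "th \<equiv> theta lam s"
abbreviation "H \<equiv> Hfun D m n s lam gam idx"
definition "db = dbar D m"

lemma th_gt: "d \<in> {1..D} \<Longrightarrow> i \<in> {1..n d} \<Longrightarrow> th d i > gam"
  using hyp by (simp add: theta_def)

lemma th_pos: "d \<in> {1..D} \<Longrightarrow> i \<in> {1..n d} \<Longrightarrow> th d i > 0"
  using th_gt gam_pos by force

lemma th_le: "d \<in> {1..D} \<Longrightarrow> i \<in> {1..n d} \<Longrightarrow> th d i \<le> lam * D"
proof -
  assume a: "d \<in> {1..D}" "i \<in> {1..n d}"
  have "th d i = lam * real d * (1 - s d i)" by (simp add: theta_def)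
  also have "\<dots> \<le> lam * real d * 1"
    using s_range a lam_pos by (intro mult_left_mono) auto
  also have "\<dots> \<le> lam * D" using a lam_pos by auto
  finally show ?thesis .
qed

lemma db_eq: "db = (\<Sum>d=1..D. real d * (\<Sum>i=1..n d. xs $ idx d i))"
  using xs_state unfolding db_def dbar_def social_state_def by (intro sum.cong) auto

lemma db_pos: "db > 0"
proof -
  have "db \<ge> real 1 * m 1" unfolding db_def dbar_def
    using D_pos m_range by (intro member_le_sum) (auto intro!: mult_nonneg_nonneg less_imp_le)
  moreover have "m 1 > 0" using m_range D_pos by auto
  ultimately show ?thesis by linarith
qed

definition "coef \<Theta> d i = real d * th d i / (db * (gam + th d i * \<Theta>))"
definition "Lf \<Theta> v = (\<Sum>d=1..D. \<Sum>i=1..n d. coef \<Theta> d i * v $ idx d i)"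
definition "Sf \<Theta> \<Theta>' v = (\<Sum>d=1..D. \<Sum>i=1..n d.
   real d * (th d i)\<^sup>2 * v $ idx d i / ((gam + th d i * \<Theta>) * (gam + th d i * \<Theta>')))"
definition "Af \<Theta> \<Theta>' v = - Sf \<Theta> \<Theta>' v / db"

lemma H_eq: "H \<Theta> y = Lf \<Theta> y - 1"
  unfolding Hfun_def Lf_def coef_def db_def[symmetric]
  by (simp add: sum_divide_distrib sum_distrib_left mult.commute mult.left_commute)

lemma Lf_diff: "Lf \<Theta> (y - z) = Lf \<Theta> y - Lf \<Theta> z"
  unfolding Lf_def by (simp add: algebra_simps sum_subtractf)

lemma Sf_add: "Sf \<Theta> \<Theta>' (y + z) = Sf \<Theta> \<Theta>' y + Sf \<Theta> \<Theta>' z"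
  unfolding Sf_def by (simp add: algebra_simps add_divide_distrib sum.distrib)

lemma H_diff:
  assumes "\<Theta> \<ge> 0" "\<Theta>' \<ge> 0"
  shows "H \<Theta>' y - H \<Theta> y = (\<Theta>' - \<Theta>) * Af \<Theta> \<Theta>' y"
proof -
  have "H \<Theta>' y - H \<Theta> y = (\<Sum>d=1..D. \<Sum>i=1..n d. (coef \<Theta>' d i - coef \<Theta> d i) * y $ idx d i)"
    unfolding H_eq Lf_def by (simp add: sum_subtractf algebra_simps)
  also have "\<dots> = (\<Sum>d=1..D. \<Sum>i=1..n d. (\<Theta>' - \<Theta>) * (- (real d * (th d i)\<^sup>2 * y $ idx d i /
      ((gam + th d i * \<Theta>) * (gam + th d i * \<Theta>'))) / db))"
  proof (intro sum.cong refl)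
    fix d i assume "d \<in> {1..D}" "i \<in> {1..n d}"
    then have "th d i > 0" by (rule th_pos)
    then have p1: "gam + th d i * \<Theta> > 0" "gam + th d i * \<Theta>' > 0" using assms gam_pos
      by (auto intro!: add_pos_nonneg)
    show "(coef \<Theta>' d i - coef \<Theta> d i) * y $ idx d i = (\<Theta>' - \<Theta>) * (- (real d * (th d i)\<^sup>2 * y $ idx d i /
      ((gam + th d i * \<Theta>) * (gam + th d i * \<Theta>'))) / db)"
      unfolding coef_def using p1 db_pos
      apply (simp add: divide_simps power2_eq_square)
      apply (simp add: algebra_simps)
      done
  qed
  also have "\<dots> = (\<Theta>' - \<Theta>) * Af \<Theta> \<Theta>' y"
    unfolding Af_def Sf_def by (simp add: sum_distrib_left sum_divide_distrib sum_negf)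
  finally show ?thesis .
qed

lemma xs_nonneg: "d \<in> {1..D} \<Longrightarrow> i \<in> {1..n d} \<Longrightarrow> xs $ idx d i \<ge> 0"
  using xs_state unfolding social_state_def by auto

lemma ex_pos: "\<exists>p. fst p \<in> {1..D} \<and> snd p \<in> {1..n (fst p)} \<and> xs $ idx (fst p) (snd p) > 0"
proof (rule ccontr)
  assume "\<not> ?thesis"
  then have "\<forall>i\<in>{1..n 1}. xs $ idx 1 i \<le> 0" using D_pos by force
  then have "(\<Sum>i=1..n 1. xs $ idx 1 i) \<le> 0" by (intro sum_nonpos) auto
  moreover have "(\<Sum>i=1..n 1. xs $ idx 1 i) = m 1" using xs_state D_pos unfolding social_state_def by auto
  ultimately show False using m_range D_pos by force
qed

definition "p0 = (SOME p. fst p \<in> {1..D} \<and> snd p \<in> {1..n (fst p)} \<and> xs $ idx (fst p) (snd p) > 0)"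
definition "d0 = fst p0"
definition "i0 = snd p0"

lemma p0_props: "d0 \<in> {1..D}" "i0 \<in> {1..n d0}" "xs $ idx d0 i0 > 0"
  using someI_ex[OF ex_pos] unfolding d0_def i0_def p0_def[symmetric] by auto

definition "K = lam * D / gam"
definition "M = real D * (lam * D)\<^sup>2"
definition "Ntot = (\<Sum>d=1..D. real (n d))"
definition "c0 = real d0 * (th d0 i0)\<^sup>2 * xs $ idx d0 i0"
definition "a0 \<Theta> \<Theta>' = 1 / ((gam + th d0 i0 * \<Theta>) * (gam + th d0 i0 * \<Theta>'))"
definition "\<delta>0 = c0 / (2 * Ntot * M * K\<^sup>2)"

lemma lamD_gt: "lam * D > gam"
  using th_gt[OF p0_props(1,2)] th_le[OF p0_props(1,2)] by linarith

lemma K_ge: "K \<ge> 1" using lamD_gt gam_pos unfolding K_def by simp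

lemma Ntot_pos: "Ntot > 0"
proof -
  have "Ntot \<ge> real (n 1)" unfolding Ntot_def using D_pos by (intro member_le_sum) auto
  with n_pos D_pos show ?thesis by force
qed

lemma M_pos: "M > 0" unfolding M_def using D_pos lam_pos by simp

lemma c0_pos: "c0 > 0" unfolding c0_def using p0_props th_pos[OF p0_props(1,2)] by simp

lemma \<delta>0_pos: "\<delta>0 > 0" unfolding \<delta>0_def using c0_pos Ntot_pos M_pos K_ge by simp

lemma ratio:
  assumes "d \<in> {1..D}" "i \<in> {1..n d}" "\<Theta> \<ge> 0"
  shows "gam + th d0 i0 * \<Theta> \<le> K * (gam + th d i * \<Theta>)"
proof -
  have "gam \<le> K * gam" using K_ge gam_pos by simp
  moreover have "th d0 i0 \<le> K * th d i"
  proof -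
    have "th d0 i0 \<le> lam * D" by (rule th_le[OF p0_props(1,2)])
    also have "\<dots> = K * gam" unfolding K_def using gam_pos by simp
    also have "\<dots> \<le> K * th d i" using th_gt[OF assms(1,2)] K_ge by simp
    finally show ?thesis .
  qed
  then have "th d0 i0 * \<Theta> \<le> K * th d i * \<Theta>" using assms(3) by (rule mult_right_mono)
  ultimately show ?thesis by (simp add: algebra_simps)
qed

lemma a_bound:
  assumes "d \<in> {1..D}" "i \<in> {1..n d}" "\<Theta> \<ge> 0" "\<Theta>' \<ge> 0"
  shows "1 / ((gam + th d i * \<Theta>) * (gam + th d i * \<Theta>')) \<le> K\<^sup>2 * a0 \<Theta> \<Theta>'"
proof -
  have t: "th d i > 0" "th d0 i0 > 0" using th_pos assms p0_props by auto
  have p: "gam + th d i * \<Theta> > 0" "gam + th d i * \<Theta>' > 0"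
     "gam + th d0 i0 * \<Theta> > 0" "gam + th d0 i0 * \<Theta>' > 0"
    using t assms gam_pos by (auto intro!: add_pos_nonneg)
  have "(gam + th d0 i0 * \<Theta>) * (gam + th d0 i0 * \<Theta>') \<le> (K * (gam + th d i * \<Theta>)) * (K * (gam + th d i * \<Theta>'))"
    using ratio[OF assms(1,2,3)] ratio[OF assms(1,2,4)] p by (intro mult_mono) auto
  then show ?thesis unfolding a0_def using p K_ge
    by (simp add: divide_simps power2_eq_square mult_ac)
qed

lemma Sf_xs_lower:
  assumes "\<Theta> \<ge> 0" "\<Theta>' \<ge> 0"
  shows "Sf \<Theta> \<Theta>' xs \<ge> c0 * a0 \<Theta> \<Theta>'"
proof -
  let ?f = "\<lambda>d i. real d * (th d i)\<^sup>2 * xs $ idx d i / ((gam + th d i * \<Theta>) * (gam + th d i * \<Theta>'))"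
  have nn: "?f d i \<ge> 0" if "d \<in> {1..D}" "i \<in> {1..n d}" for d i
    using xs_nonneg[OF that] th_pos[OF that] assms gam_pos
    by (intro divide_nonneg_pos mult_nonneg_nonneg mult_pos_pos add_pos_nonneg) auto
  have "c0 * a0 \<Theta> \<Theta>' = ?f d0 i0" unfolding c0_def a0_def by simp
  also have "\<dots> \<le> (\<Sum>i=1..n d0. ?f d0 i)" using nn p0_props by (intro member_le_sum) auto
  also have "\<dots> \<le> (\<Sum>d=1..D. \<Sum>i=1..n d. ?f d i)" using nn p0_props
    by (intro member_le_sum sum_nonneg) auto
  finally show ?thesis unfolding Sf_def .
qed

lemma Sf_pert:
  assumes "\<Theta> \<ge> 0" "\<Theta>' \<ge> 0" "\<forall>j. \<bar>v $ j\<bar> \<le> \<delta>"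
  shows "\<bar>Sf \<Theta> \<Theta>' v\<bar> \<le> Ntot * M * K\<^sup>2 * \<delta> * a0 \<Theta> \<Theta>'"
proof -
  have "\<bar>Sf \<Theta> \<Theta>' v\<bar> \<le> (\<Sum>d=1..D. \<bar>\<Sum>i=1..n d. real d * (th d i)\<^sup>2 * v $ idx d i / ((gam + th d i * \<Theta>) * (gam + th d i * \<Theta>'))\<bar>)"
    unfolding Sf_def by (rule sum_abs)
  also have "\<dots> \<le> (\<Sum>d=1..D. \<Sum>i=1..n d. M * K\<^sup>2 * \<delta> * a0 \<Theta> \<Theta>')"
  proof (intro sum_mono order.trans[OF sum_abs])
    fix d i assume a: "d \<in> {1..D}" "i \<in> {1..n d}"
    have t: "th d i > 0" using th_pos a by auto
    have p: "gam + th d i * \<Theta> > 0" "gam + th d i * \<Theta>' > 0"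
      using t assms gam_pos by (auto intro!: add_pos_nonneg)
    have e: "\<bar>real d * (th d i)\<^sup>2 * v $ idx d i / ((gam + th d i * \<Theta>) * (gam + th d i * \<Theta>'))\<bar>
       = (real d * (th d i)\<^sup>2) * \<bar>v $ idx d i\<bar> * (1 / ((gam + th d i * \<Theta>) * (gam + th d i * \<Theta>')))"
      using p by (simp add: abs_mult abs_divide)
    have "real d * (th d i)\<^sup>2 \<le> M" unfolding M_def using a t th_le[OF a]
      by (intro mult_mono power_mono) auto
    moreover have "\<bar>v $ idx d i\<bar> \<le> \<delta>" using assms(3) by auto
    moreover note a_bound[OF a assms(1,2)]
    moreover have "\<delta> \<ge> 0" using assms(3) abs_ge_zero order_trans by blast
    ultimately have "(real d * (th d i)\<^sup>2) * \<bar>v $ idx d i\<bar> * (1 / ((gam + th d i * \<Theta>) * (gam + th d i * \<Theta>')))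
       \<le> M * \<delta> * (K\<^sup>2 * a0 \<Theta> \<Theta>')"
      using p M_pos by (intro mult_mono) auto
    then show "\<bar>real d * (th d i)\<^sup>2 * v $ idx d i / ((gam + th d i * \<Theta>) * (gam + th d i * \<Theta>'))\<bar>
       \<le> M * K\<^sup>2 * \<delta> * a0 \<Theta> \<Theta>'" unfolding e by (simp add: mult_ac)
  qed
  also have "\<dots> = Ntot * M * K\<^sup>2 * \<delta> * a0 \<Theta> \<Theta>'"
    unfolding Ntot_def by (simp add: sum_distrib_left sum_distrib_right mult_ac)
  finally show ?thesis .
qed

lemma a0_pos: "\<Theta> \<ge> 0 \<Longrightarrow> \<Theta>' \<ge> 0 \<Longrightarrow> a0 \<Theta> \<Theta>' > 0"
  unfolding a0_def using th_pos[OF p0_props(1,2)] gam_pos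
  by (intro divide_pos_pos mult_pos_pos add_pos_nonneg) auto

lemma Sf_lower:
  assumes "\<Theta> \<ge> 0" "\<Theta>' \<ge> 0" "norm (y - xs) \<le> \<delta>0"
  shows "Sf \<Theta> \<Theta>' y \<ge> c0 / 2 * a0 \<Theta> \<Theta>'"
proof -
  have "\<forall>j. \<bar>(y - xs) $ j\<bar> \<le> \<delta>0" using assms(3) component_le_norm_cart order_trans by blast
  from Sf_pert[OF assms(1,2) this]
  have "\<bar>Sf \<Theta> \<Theta>' (y - xs)\<bar> \<le> c0 / 2 * a0 \<Theta> \<Theta>'"
    unfolding \<delta>0_def using Ntot_pos M_pos K_ge by (simp add: field_simps)
  moreover have "Sf \<Theta> \<Theta>' y = Sf \<Theta> \<Theta>' xs + Sf \<Theta> \<Theta>' (y - xs)"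
    using Sf_add[of \<Theta> \<Theta>' xs "y - xs"] by simp
  ultimately show ?thesis using Sf_xs_lower[OF assms(1,2)] by linarith
qed

lemma Af_neg:
  assumes "\<Theta> \<ge> 0" "\<Theta>' \<ge> 0" "norm (y - xs) \<le> \<delta>0"
  shows "Af \<Theta> \<Theta>' y \<le> - (c0 / 2 * a0 \<Theta> \<Theta>') / db" "Af \<Theta> \<Theta>' y < 0"
proof -
  show 1: "Af \<Theta> \<Theta>' y \<le> - (c0 / 2 * a0 \<Theta> \<Theta>') / db"
    unfolding Af_def using divide_right_mono[OF Sf_lower[OF assms], of db] db_pos by simp
  have "c0 / 2 * a0 \<Theta> \<Theta>' / db > 0" using c0_pos a0_pos[OF assms(1,2)] db_pos by simp
  with 1 show "Af \<Theta> \<Theta>' y < 0" by simp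
qed


lemma H_mono:
  assumes "norm (y - xs) \<le> \<delta>0" "0 \<le> \<Theta>" "\<Theta> < \<Theta>'"
  shows "H \<Theta>' y < H \<Theta> y"
proof -
  have "H \<Theta>' y - H \<Theta> y = (\<Theta>' - \<Theta>) * Af \<Theta> \<Theta>' y" using assms by (intro H_diff) auto
  moreover have "Af \<Theta> \<Theta>' y < 0" using assms by (intro Af_neg) auto
  moreover have "(\<Theta>' - \<Theta>) * Af \<Theta> \<Theta>' y < 0" using assms(3) calculation(2) by (intro mult_pos_neg) auto
  ultimately show ?thesis by linarith
qed

lemma root_unique:
  assumes "norm (y - xs) \<le> \<delta>0" "0 \<le> \<Theta>" "0 \<le> \<Theta>'" "H \<Theta> y = 0" "H \<Theta>' y = 0"
  shows "\<Theta> = \<Theta>'"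
  using H_mono[OF assms(1,2), of \<Theta>'] H_mono[OF assms(1,3), of \<Theta>] assms(4,5)
  by (cases "\<Theta> < \<Theta>'"; cases "\<Theta>' < \<Theta>") auto

lemma H_cont: "0 \<le> a \<Longrightarrow> continuous_on {a..b} (\<lambda>\<Theta>. H \<Theta> y)"
  unfolding H_eq Lf_def coef_def
  apply (intro continuous_intros)
  using th_pos db_pos gam_pos
  by (smt (verit, del_insts) atLeastAtMost_iff mult_nonneg_nonneg mult_pos_pos)

lemma sum_xs: "(\<Sum>d=1..D. \<Sum>i=1..n d. real d / db * xs $ idx d i) = 1"
  using db_eq db_pos by (simp add: sum_distrib_left[symmetric] sum_divide_distrib[symmetric] mult.assoc)

lemma H0_pos: "H 0 xs > 0"
proof -
  let ?f = "\<lambda>d i. (coef 0 d i - real d / db) * xs $ idx d i"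
  have nn: "?f d i \<ge> 0" if "d \<in> {1..D}" "i \<in> {1..n d}" for d i
  proof -
    have "coef 0 d i = real d / db * (th d i / gam)" unfolding coef_def using gam_pos db_pos by simp
    then have c: "coef 0 d i - real d / db = real d / db * (th d i / gam - 1)" by (simp add: algebra_simps)
    have "th d i / gam > 1" using th_gt[OF that] gam_pos by simp
    then have "coef 0 d i - real d / db \<ge> 0" unfolding c using that db_pos
      by (intro mult_nonneg_nonneg) auto
    then show ?thesis using xs_nonneg[OF that] by simp
  qed
  have "?f d0 i0 > 0"
  proof -
    have "coef 0 d0 i0 = real d0 / db * (th d0 i0 / gam)" unfolding coef_def using gam_pos db_pos by simp
    then have c: "coef 0 d0 i0 - real d0 / db = real d0 / db * (th d0 i0 / gam - 1)" by (simp add: algebra_simps)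
    have "th d0 i0 / gam > 1" using th_gt[OF p0_props(1,2)] gam_pos by simp
    then have "coef 0 d0 i0 - real d0 / db > 0" unfolding c using p0_props db_pos
      by (intro mult_pos_pos) auto
    then show ?thesis using p0_props(3) by simp
  qed
  also have "?f d0 i0 \<le> (\<Sum>i=1..n d0. ?f d0 i)" using nn p0_props by (intro member_le_sum) auto
  also have "\<dots> \<le> (\<Sum>d=1..D. \<Sum>i=1..n d. ?f d i)" using nn p0_props
    by (intro member_le_sum sum_nonneg) auto
  also have "\<dots> = Lf 0 xs - 1" unfolding Lf_def sum_xs[symmetric]
    by (simp add: sum_subtractf algebra_simps)
  finally show ?thesis unfolding H_eq by simp
qed

lemma H2_neg: "H 2 xs < 0"
proof -
  have "Lf 2 xs \<le> (\<Sum>d=1..D. \<Sum>i=1..n d. real d / db / 2 * xs $ idx d i)"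
    unfolding Lf_def
  proof (intro sum_mono mult_right_mono)
    fix d i assume a: "d \<in> {1..D}" "i \<in> {1..n d}"
    show "xs $ idx d i \<ge> 0" using xs_nonneg[OF a] .
    have t: "th d i > 0" using th_pos[OF a] .
    show "coef 2 d i \<le> real d / db / 2" unfolding coef_def using t gam_pos db_pos a
      by (simp add: divide_simps)
  qed
  also have "\<dots> = 1 / 2" using sum_xs
    by (simp add: sum_divide_distrib[symmetric] divide_simps mult.commute mult.left_commute)
  finally show ?thesis unfolding H_eq by simp
qed

definition "Ts = Theta_bar D m n s lam gam idx xs"

lemma Ts_props: "Ts > 0" "H Ts xs = 0"
proof -
  obtain t where t: "0 \<le> t" "t \<le> 2" "H t xs = 0"
    using IVT2'[of "\<lambda>\<Theta>. H \<Theta> xs" 2 0 0] H0_pos H2_neg H_cont[of 0 2 xs] by auto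
  have tp: "t > 0" using t H0_pos by (cases "t = 0") auto
  have "Ts = t" unfolding Ts_def Theta_bar_def
  proof (rule the_equality)
    show "0 < t \<and> H t xs = 0" using tp t by auto
    fix u assume "0 < u \<and> H u xs = 0"
    then show "u = t" using root_unique[of xs u t] t \<delta>0_pos by auto
  qed
  then show "Ts > 0" "H Ts xs = 0" using tp t by auto
qed


lemma term_deriv:
  assumes g: "(g has_real_derivative p) (at 0)" and g0: "g 0 > 0"
    and a: "d \<in> {1..D}" "i \<in> {1..n d}"
  shows "((\<lambda>t. coef (g t) d i * (y0 + t *\<^sub>R v) $ idx d i) has_real_derivative
     (coef (g 0) d i * v $ idx d i + p * (- (real d * (th d i)\<^sup>2 * y0 $ idx d i /
      ((gam + th d i * g 0) * (gam + th d i * g 0))) / db))) (at 0)"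
proof -
  have t: "th d i > 0" using th_pos[OF a] .
  have q: "gam + th d i * g 0 > 0" using t g0 gam_pos by (simp add: add_pos_pos)
  have h1: "((\<lambda>t. (y0 + t *\<^sub>R v) $ idx d i) has_real_derivative v $ idx d i) (at 0)"
    by (auto intro!: derivative_eq_intros)
  have h2: "((\<lambda>t. coef (g t) d i) has_real_derivative
      (- (real d * (th d i)\<^sup>2 * p / ((gam + th d i * g 0) * (gam + th d i * g 0))) / db)) (at 0)"
    unfolding coef_def
    apply (rule derivative_eq_intros g refl)+
    using q db_pos
     apply simp
    apply (simp add: divide_simps power2_eq_square)
    done
  show ?thesis using DERIV_mult[OF h2 h1] by (simp add: algebra_simps)
qed


lemma H_chain:
  assumes g: "(g has_real_derivative p) (at 0)" and g0: "g 0 > 0"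
  shows "((\<lambda>t. H (g t) (y0 + t *\<^sub>R v)) has_real_derivative
          (Lf (g 0) v + p * Af (g 0) (g 0) y0)) (at 0)"
proof -
  have "((\<lambda>t. (\<Sum>d=1..D. \<Sum>i=1..n d. coef (g t) d i * (y0 + t *\<^sub>R v) $ idx d i) - 1) has_real_derivative
     (\<Sum>d=1..D. \<Sum>i=1..n d. coef (g 0) d i * v $ idx d i + p * (- (real d * (th d i)\<^sup>2 * y0 $ idx d i /
      ((gam + th d i * g 0) * (gam + th d i * g 0))) / db)) - 0) (at 0)"
    by (intro DERIV_diff DERIV_sum term_deriv[OF g g0] DERIV_const) auto
  moreover have "(\<Sum>d=1..D. \<Sum>i=1..n d. coef (g 0) d i * v $ idx d i + p * (- (real d * (th d i)\<^sup>2 * y0 $ idx d i /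
      ((gam + th d i * g 0) * (gam + th d i * g 0))) / db)) - 0 = Lf (g 0) v + p * Af (g 0) (g 0) y0"
    unfolding Lf_def Af_def Sf_def
    by (simp add: sum.distrib sum_distrib_left sum_divide_distrib sum_negf sum_subtractf)
  ultimately show ?thesis unfolding H_eq Lf_def by simp
qed

lemma Lf_zero: "Lf \<Theta> 0 = 0" unfolding Lf_def by simp

lemma H_deriv:
  assumes "\<Theta>0 > 0"
  shows "((\<lambda>\<Theta>. H \<Theta> y) has_real_derivative Af \<Theta>0 \<Theta>0 y) (at \<Theta>0)"
proof -
  have "((\<lambda>t. H (t + \<Theta>0) (y + t *\<^sub>R 0)) has_real_derivative (Lf \<Theta>0 0 + 1 * Af \<Theta>0 \<Theta>0 y)) (at 0)"
  proof -
    have "((\<lambda>t. t + \<Theta>0) has_real_derivative 1) (at 0)" by (auto intro!: derivative_eq_intros)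
    from H_chain[OF this, of y 0] assms show ?thesis by simp
  qed
  then have "((\<lambda>t. H (t + \<Theta>0) y) has_real_derivative Af \<Theta>0 \<Theta>0 y) (at 0)" by (simp add: Lf_zero)
  then show ?thesis using DERIV_shift[of "\<lambda>\<Theta>. H \<Theta> y" _ 0 \<Theta>0] by simp
qed

lemma H_cont_y: "continuous_on UNIV (\<lambda>y. H \<Theta> y)"
  unfolding H_eq Lf_def by (intro continuous_intros)

lemma Lf_bound: "\<bar>Lf \<Theta> v\<bar> \<le> (\<Sum>d=1..D. \<Sum>i=1..n d. \<bar>coef \<Theta> d i\<bar>) * norm v"
proof -
  have "\<bar>Lf \<Theta> v\<bar> \<le> (\<Sum>d=1..D. \<bar>\<Sum>i=1..n d. coef \<Theta> d i * v $ idx d i\<bar>)"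
    unfolding Lf_def by (rule sum_abs)
  also have "\<dots> \<le> (\<Sum>d=1..D. \<Sum>i=1..n d. \<bar>coef \<Theta> d i\<bar> * norm v)"
  proof (intro sum_mono order.trans[OF sum_abs])
    fix d i
    show "\<bar>coef \<Theta> d i * v $ idx d i\<bar> \<le> \<bar>coef \<Theta> d i\<bar> * norm v"
      unfolding abs_mult by (intro mult_left_mono component_le_norm_cart) auto
  qed
  also have "\<dots> = (\<Sum>d=1..D. \<Sum>i=1..n d. \<bar>coef \<Theta> d i\<bar>) * norm v"
    by (simp add: sum_distrib_right)
  finally show ?thesis .
qed

lemma a0_anti:
  assumes "0 \<le> \<Theta>" "\<Theta> \<le> T" "0 \<le> \<Theta>'" "\<Theta>' \<le> T"
  shows "a0 T T \<le> a0 \<Theta> \<Theta>'"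
proof -
  have t: "th d0 i0 > 0" using th_pos p0_props by auto
  have p: "gam + th d0 i0 * \<Theta> > 0" "gam + th d0 i0 * \<Theta>' > 0"
    using t assms gam_pos by (auto intro!: add_pos_nonneg)
  have "(gam + th d0 i0 * \<Theta>) * (gam + th d0 i0 * \<Theta>') \<le> (gam + th d0 i0 * T) * (gam + th d0 i0 * T)"
    using p t assms gam_pos by (intro mult_mono) (auto intro!: add_nonneg_nonneg)
  moreover have "gam + th d0 i0 * T > 0" using t assms gam_pos by (auto intro!: add_pos_nonneg)
  ultimately show ?thesis unfolding a0_def using p by (intro divide_left_mono mult_pos_pos) auto
qed


definition "T1 = Ts / 2"
definition "T2 = 2 * Ts"
definition "NN = ball xs \<delta>0 \<inter> {y. 0 < H T1 y} \<inter> {y. H T2 y < 0}"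
definition "hh y = (THE \<Theta>. \<Theta> > 0 \<and> H \<Theta> y = 0)"
definition "epsA = c0 / 2 * a0 T2 T2 / db"

lemma T_props: "0 < T1" "T1 < Ts" "Ts < T2" "H T1 xs > 0" "H T2 xs < 0"
proof -
  show "0 < T1" "T1 < Ts" "Ts < T2" using Ts_props unfolding T1_def T2_def by auto
  then show "H T1 xs > 0" "H T2 xs < 0"
    using H_mono[of xs T1 Ts] H_mono[of xs Ts T2] Ts_props \<delta>0_pos by auto
qed

lemma NN_open: "open NN"
  unfolding NN_def using H_cont_y
  by (intro open_Int open_ball open_Collect_less) (auto intro: continuous_intros)

lemma xs_NN: "xs \<in> NN" unfolding NN_def using T_props \<delta>0_pos by auto

lemma NN_norm: "y \<in> NN \<Longrightarrow> norm (y - xs) \<le> \<delta>0"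
  unfolding NN_def by (auto simp: dist_norm norm_minus_commute)

lemma hh_props:
  assumes "y \<in> NN"
  shows "hh y > 0" "H (hh y) y = 0" "T1 \<le> hh y" "hh y \<le> T2"
proof -
  have a: "H T2 y \<le> 0" "0 \<le> H T1 y" using assms unfolding NN_def by auto
  obtain t where t: "T1 \<le> t" "t \<le> T2" "H t y = 0"
    using IVT2'[of "\<lambda>\<Theta>. H \<Theta> y" T2 0 T1] a T_props H_cont[of T1 T2 y] by auto
  have "hh y = t" unfolding hh_def
  proof (rule the_equality)
    show "0 < t \<and> H t y = 0" using t T_props by auto
    fix u assume "0 < u \<and> H u y = 0"
    then show "u = t" using root_unique[of y u t] t T_props NN_norm[OF assms] by auto
  qed
  then show "hh y > 0" "H (hh y) y = 0" "T1 \<le> hh y" "hh y \<le> T2" using t T_props by auto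
qed

lemma hh_xs: "hh xs = Ts"
  using root_unique[of xs "hh xs" Ts] hh_props[OF xs_NN] Ts_props \<delta>0_pos by auto

lemma epsA_pos: "epsA > 0"
  unfolding epsA_def using c0_pos a0_pos[of T2 T2] T_props db_pos by simp

lemma Af_bound:
  assumes "y \<in> NN" "0 \<le> \<Theta>" "\<Theta> \<le> T2" "0 \<le> \<Theta>'" "\<Theta>' \<le> T2"
  shows "Af \<Theta> \<Theta>' y \<le> - epsA"
proof -
  have "Af \<Theta> \<Theta>' y \<le> - (c0 / 2 * a0 \<Theta> \<Theta>') / db"
    using Af_neg(1)[OF assms(2,4) NN_norm[OF assms(1)]] .
  moreover have "c0 / 2 * a0 T2 T2 \<le> c0 / 2 * a0 \<Theta> \<Theta>'"
    using a0_anti[OF assms(2-5)] c0_pos by simp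
  then have "c0 / 2 * a0 T2 T2 / db \<le> c0 / 2 * a0 \<Theta> \<Theta>' / db"
    using db_pos by (intro divide_right_mono) auto
  ultimately show ?thesis unfolding epsA_def by simp
qed

lemma H_y_diff: "H \<Theta> y - H \<Theta> z = Lf \<Theta> (y - z)"
  unfolding H_eq Lf_diff by simp

lemma hh_ident:
  assumes "y0 \<in> NN" "y \<in> NN"
  shows "hh y - hh y0 = - Lf (hh y0) (y - y0) / Af (hh y0) (hh y) y"
proof -
  note p0 = hh_props[OF assms(1)] and p = hh_props[OF assms(2)]
  have "0 = H (hh y) y - H (hh y0) y0" using p0 p by simp
  also have "\<dots> = (H (hh y) y - H (hh y0) y) + (H (hh y0) y - H (hh y0) y0)" by simp
  also have "\<dots> = (hh y - hh y0) * Af (hh y0) (hh y) y + Lf (hh y0) (y - y0)"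
    using p0 p H_diff[of "hh y0" "hh y" y] H_y_diff[of "hh y0" y y0] by simp
  finally have e: "(hh y - hh y0) * Af (hh y0) (hh y) y = - Lf (hh y0) (y - y0)" by linarith
  have "Af (hh y0) (hh y) y \<le> - epsA" using Af_bound[OF assms(2)] p0 p T_props by auto
  then have "Af (hh y0) (hh y) y \<noteq> 0" using epsA_pos by auto
  with e show ?thesis by (simp add: field_simps)
qed


definition "Cb \<Theta> = (\<Sum>d=1..D. \<Sum>i=1..n d. \<bar>coef \<Theta> d i\<bar>)"

lemma Cb_nonneg: "Cb \<Theta> \<ge> 0" unfolding Cb_def by (intro sum_nonneg) auto

lemma Af_abs: "y \<in> NN \<Longrightarrow> y0 \<in> NN \<Longrightarrow> \<bar>Af (hh y0) (hh y) y\<bar> \<ge> epsA"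
  using Af_bound[of y "hh y0" "hh y"] hh_props[of y] hh_props[of y0] T_props by force

lemma hh_tendsto:
  assumes y0: "y0 \<in> NN"
  shows "(hh \<longlongrightarrow> hh y0) (at y0)"
proof -
  have ev: "eventually (\<lambda>y. y \<in> NN) (at y0)" by (rule eventually_at_in_open'[OF NN_open y0])
  have "((\<lambda>y. hh y - hh y0) \<longlongrightarrow> 0) (at y0)"
  proof (rule Lim_null_comparison[where g = "\<lambda>y. Cb (hh y0) / epsA * norm (y - y0)"])
    show "eventually (\<lambda>y. norm (hh y - hh y0) \<le> Cb (hh y0) / epsA * norm (y - y0)) (at y0)"
      using ev
    proof (rule eventually_mono)
      fix y assume y: "y \<in> NN"
      have A: "\<bar>Af (hh y0) (hh y) y\<bar> \<ge> epsA" by (rule Af_abs[OF y y0])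
      have "norm (hh y - hh y0) = \<bar>Lf (hh y0) (y - y0)\<bar> / \<bar>Af (hh y0) (hh y) y\<bar>"
        using hh_ident[OF y0 y] by (simp add: abs_divide)
      also have "\<dots> \<le> \<bar>Lf (hh y0) (y - y0)\<bar> / epsA"
        using A epsA_pos by (intro divide_left_mono) auto
      also have "\<dots> \<le> Cb (hh y0) * norm (y - y0) / epsA"
        using Lf_bound[of "hh y0" "y - y0"] epsA_pos unfolding Cb_def by (intro divide_right_mono) auto
      finally show "norm (hh y - hh y0) \<le> Cb (hh y0) / epsA * norm (y - y0)" by simp
    qed
    have "((\<lambda>y. Cb (hh y0) / epsA * norm (y - y0)) \<longlongrightarrow> Cb (hh y0) / epsA * norm (y0 - y0)) (at y0)"
      by (intro tendsto_intros)
    then show "((\<lambda>y. Cb (hh y0) / epsA * norm (y - y0)) \<longlongrightarrow> 0) (at y0)" by simp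
  qed
  then show ?thesis by (simp add: LIM_zero_iff)
qed

lemma hh_cont: "continuous_on NN hh"
  using hh_tendsto by (intro continuous_at_imp_continuous_on) (simp add: isCont_def)

lemma Af_tendsto:
  fixes g :: "'b \<Rightarrow> real ^ 'i"
  assumes f: "(f \<longlongrightarrow> f0) F" and g: "(g \<longlongrightarrow> g0) F" and T0: "T0 \<ge> 0" and f0: "f0 \<ge> 0"
  shows "((\<lambda>x. Af T0 (f x) (g x)) \<longlongrightarrow> Af T0 f0 g0) F"
  unfolding Af_def Sf_def
  apply (intro tendsto_intros f g tendsto_vec_nth)
  using db_pos th_pos gam_pos T0 f0
   apply (smt (verit, del_insts) mult_nonneg_nonneg mult_pos_pos)
  using db_pos by simp


definition "hp y0 = (\<Sum>d=1..D. \<Sum>i=1..n d.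
   (- coef (hh y0) d i / Af (hh y0) (hh y0) y0) *\<^sub>R blinfun_inner_left (axis (idx d i) 1))"

lemma hp_apply: "blinfun_apply (hp y0) v = - Lf (hh y0) v / Af (hh y0) (hh y0) y0"
  unfolding hp_def Lf_def
  by (simp add: blinfun.sum_left blinfun.minus_left blinfun.scaleR_left inner_axis sum_divide_distrib sum_negf)

lemma hh_deriv:
  assumes y0: "y0 \<in> NN"
  shows "(hh has_derivative blinfun_apply (hp y0)) (at y0)"
  unfolding has_derivative_at_within
proof (intro conjI)
  show "bounded_linear (blinfun_apply (hp y0))" by (rule blinfun.bounded_linear_right)
  define A where "A = (\<lambda>y. Af (hh y0) (hh y) y)"
  define A0 where "A0 = Af (hh y0) (hh y0) y0"
  have ev: "eventually (\<lambda>y. y \<in> NN) (at y0)" by (rule eventually_at_in_open'[OF NN_open y0])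
  have A0nz: "A0 \<noteq> 0" unfolding A0_def using Af_abs[OF y0 y0] epsA_pos by auto
  show "((\<lambda>y. (hh y - hh y0 - blinfun_apply (hp y0) (y - y0)) /\<^sub>R norm (y - y0)) \<longlongrightarrow> 0) (at y0)"
  proof (rule Lim_null_comparison[where g = "\<lambda>y. Cb (hh y0) * \<bar>1 / A y - 1 / A0\<bar>"])
    show "eventually (\<lambda>y. norm ((hh y - hh y0 - blinfun_apply (hp y0) (y - y0)) /\<^sub>R norm (y - y0))
        \<le> Cb (hh y0) * \<bar>1 / A y - 1 / A0\<bar>) (at y0)"
      using ev
    proof (rule eventually_mono)
      fix y assume y: "y \<in> NN"
      have "hh y - hh y0 - blinfun_apply (hp y0) (y - y0) = - Lf (hh y0) (y - y0) * (1 / A y - 1 / A0)"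
        unfolding hh_ident[OF y0 y] hp_apply A_def A0_def by (simp add: algebra_simps)
      then have "norm ((hh y - hh y0 - blinfun_apply (hp y0) (y - y0)) /\<^sub>R norm (y - y0))
          = \<bar>Lf (hh y0) (y - y0)\<bar> / norm (y - y0) * \<bar>1 / A y - 1 / A0\<bar>"
        by (simp add: abs_mult divide_inverse mult_ac)
      also have "\<dots> \<le> Cb (hh y0) * \<bar>1 / A y - 1 / A0\<bar>"
      proof (intro mult_right_mono)
        show "\<bar>Lf (hh y0) (y - y0)\<bar> / norm (y - y0) \<le> Cb (hh y0)"
        proof (cases "y = y0")
          case True then show ?thesis using Cb_nonneg by simp
        next
          case False
          then have "norm (y - y0) > 0" by simp
          then show ?thesis using Lf_bound[of "hh y0" "y - y0"] unfolding Cb_def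
            by (simp add: divide_simps)
        qed
      qed auto
      finally show "norm ((hh y - hh y0 - blinfun_apply (hp y0) (y - y0)) /\<^sub>R norm (y - y0))
        \<le> Cb (hh y0) * \<bar>1 / A y - 1 / A0\<bar>" .
    qed
    have "(A \<longlongrightarrow> A0) (at y0)"
      unfolding A_def A0_def using hh_props[OF y0] by (intro Af_tendsto hh_tendsto[OF y0] tendsto_ident_at) auto
    then have "((\<lambda>y. Cb (hh y0) * \<bar>1 / A y - 1 / A0\<bar>) \<longlongrightarrow> Cb (hh y0) * \<bar>1 / A0 - 1 / A0\<bar>) (at y0)"
      using A0nz by (intro tendsto_intros) auto
    then show "((\<lambda>y. Cb (hh y0) * \<bar>1 / A y - 1 / A0\<bar>) \<longlongrightarrow> 0) (at y0)" by simp
  qed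
qed

lemma hp_cont: "continuous_on NN hp"
proof -
  have c1: "continuous_on NN (\<lambda>y. Af (hh y) (hh y) y)"
  proof (intro continuous_at_imp_continuous_on ballI)
    fix y0 assume y0: "y0 \<in> NN"
    have "((\<lambda>y. Af (hh y) (hh y) y) \<longlongrightarrow> Af (hh y0) (hh y0) y0) (at y0)"
      unfolding Af_def Sf_def
      apply (intro tendsto_intros hh_tendsto[OF y0] tendsto_vec_nth tendsto_ident_at)
      using db_pos th_pos gam_pos hh_props[OF y0]
       apply (smt (verit, del_insts) mult_nonneg_nonneg mult_pos_pos)
      using db_pos by simp
    then show "isCont (\<lambda>y. Af (hh y) (hh y) y) y0" by (simp add: isCont_def)
  qed
  have nz: "\<forall>y\<in>NN. Af (hh y) (hh y) y \<noteq> 0" using Af_abs epsA_pos by force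
  show ?thesis unfolding hp_def coef_def
    apply (intro continuous_intros hh_cont c1)
    using nz db_pos th_pos gam_pos hh_props
     apply auto
    by (smt (verit) mult_pos_pos)
qed


lemma Lf_axis:
  assumes c: "c \<in> {1..D}" "l \<in> {1..n c}"
  shows "Lf \<Theta> (axis (idx c l) 1) = coef \<Theta> c l"
proof -
  have inj: "inj_on (\<lambda>(d, i). idx d i) {(d, i). d \<in> {1..D} \<and> i \<in> {1..n d}}"
    using idx_bij bij_betw_def by blast
  have eq: "idx d i = idx c l \<longleftrightarrow> d = c \<and> i = l" if "d \<in> {1..D}" "i \<in> {1..n d}" for d i
    using inj_onD[OF inj, of "(d, i)" "(c, l)"] that c by auto
  have "Lf \<Theta> (axis (idx c l) 1) = (\<Sum>d=1..D. \<Sum>i=1..n d. if d = c \<and> i = l then coef \<Theta> d i else 0)"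
    unfolding Lf_def by (intro sum.cong refl) (auto simp: axis_def eq)
  also have "\<dots> = (\<Sum>d=1..D. if d = c then coef \<Theta> c l else 0)"
    using c by (intro sum.cong refl) (auto simp: sum.delta)
  also have "\<dots> = coef \<Theta> c l" using c by (simp add: sum.delta)
  finally show ?thesis .
qed

lemma partial_payoff:
  assumes N: "open N" "xs \<in> N" and hs: "implicit_sol D m n s lam gam idx N xs Ts h"
    and c: "c \<in> {1..D}" "l \<in> {1..n c}" and d: "d \<in> {1..D}" "k \<in> {1..n d}"
  shows "partial (payoff s r lam gam h d k) xs (idx c l) =
     (1 - s d k) * th d k * gam / (gam + th d k * Ts)\<^sup>2 * coef Ts c l / Af Ts Ts xs"
proof -
  obtain h' where h': "\<forall>y\<in>N. (h has_derivative blinfun_apply (h' y)) (at y)"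
    and hpos: "\<forall>y\<in>N. h y > 0" and hx: "h xs = Ts" and hH: "\<forall>y\<in>N. H (h y) y = 0"
    using hs unfolding implicit_sol_def by blast
  define e :: "real ^ 'i" where "e = axis (idx c l) 1"
  define g where "g = (\<lambda>t::real. h (xs + t *\<^sub>R e))"
  define p where "p = blinfun_apply (h' xs) e"
  have "((h \<circ> (\<lambda>t. xs + t *\<^sub>R e)) has_derivative (blinfun_apply (h' xs) \<circ> (\<lambda>t. t *\<^sub>R e))) (at 0)"
    by (rule diff_chain_at) (auto intro!: derivative_eq_intros simp: h' N)
  moreover have "(blinfun_apply (h' xs) \<circ> (\<lambda>t. t *\<^sub>R e)) = (*) p"
    unfolding p_def by (auto simp: blinfun.scaleR_right)
  ultimately have gd: "(g has_real_derivative p) (at 0)"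
    unfolding has_field_derivative_def g_def by (simp add: o_def)
  have g0: "g 0 = Ts" unfolding g_def using hx by simp
  have Ts0: "Ts > 0" using Ts_props by simp
  have A0: "Af Ts Ts xs < 0" using Af_neg[of Ts Ts xs] Ts0 \<delta>0_pos by auto
  have d1: "((\<lambda>t. H (g t) (xs + t *\<^sub>R e)) has_real_derivative (Lf Ts e + p * Af Ts Ts xs)) (at 0)"
    using H_chain[OF gd, of xs e] g0 Ts0 by simp
  obtain \<epsilon> where \<epsilon>: "\<epsilon> > 0" "ball xs \<epsilon> \<subseteq> N" using N open_contains_ball by blast
  have ne: "norm e = 1" unfolding e_def by simp
  have ev: "eventually (\<lambda>t. H (g t) (xs + t *\<^sub>R e) = 0) (nhds (0::real))"
    unfolding eventually_nhds_metric
  proof (intro exI conjI allI impI)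
    show "\<epsilon> > 0" by fact
    fix t :: real assume "dist t 0 < \<epsilon>"
    then have "xs + t *\<^sub>R e \<in> N" using \<epsilon> ne by (auto simp: dist_norm)
    then show "H (g t) (xs + t *\<^sub>R e) = 0" unfolding g_def using hH by auto
  qed
  have "((\<lambda>t. H (g t) (xs + t *\<^sub>R e)) has_real_derivative 0) (at 0)"
    using DERIV_cong_ev[OF refl ev refl] by simp
  with d1 have "Lf Ts e + p * Af Ts Ts xs = 0" by (rule DERIV_unique)
  then have pe: "p = - coef Ts c l / Af Ts Ts xs" unfolding e_def Lf_axis[OF c] using A0
    by (simp add: field_simps)
  have t: "th d k > 0" using th_pos[OF d] .
  have q: "gam + th d k * Ts > 0" using t Ts0 gam_pos by (simp add: add_pos_pos)
  have pf: "(\<lambda>t. payoff s r lam gam h d k (xs + t *\<^sub>R axis (idx c l) 1)) =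
     (\<lambda>t. s d k * r - (1 - s d k) * (th d k * g t / (gam + th d k * g t)))"
    unfolding payoff_def g_def e_def by simp
  have h3: "((\<lambda>t. th d k * g t / (gam + th d k * g t)) has_real_derivative
      th d k * gam * p / (gam + th d k * Ts)\<^sup>2) (at 0)"
    apply (rule derivative_eq_intros gd refl)+
    using q g0 by (auto simp: divide_simps power2_eq_square algebra_simps)
  have "((\<lambda>t. payoff s r lam gam h d k (xs + t *\<^sub>R axis (idx c l) 1)) has_real_derivative
      - (1 - s d k) * (th d k * gam * p / (gam + th d k * Ts)\<^sup>2)) (at 0)"
    unfolding pf by (rule DERIV_cong[OF DERIV_diff[OF DERIV_const DERIV_cmult[OF h3, of "1 - s d k"], of "s d k * r"]])
      (simp add: algebra_simps, metis minus_diff_eq minus_divide_left)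
  then have "partial (payoff s r lam gam h d k) xs (idx c l) = - (1 - s d k) * (th d k * gam * p / (gam + th d k * Ts)\<^sup>2)"
    unfolding partial_def by (rule DERIV_imp_deriv)
  then show ?thesis unfolding pe by (simp add: field_simps, metis minus_diff_eq minus_divide_left)
qed


lemma phi_mono:
  assumes "0 < u1" "u1 < u2"
  shows "u1 / (gam + u1 * Ts) < u2 / (gam + u2 * Ts)"
proof -
  have T: "Ts > 0" using Ts_props by simp
  have p: "gam + u1 * Ts > 0" "gam + u2 * Ts > 0" using assms T gam_pos by (auto intro!: add_pos_pos)
  have "u1 * (gam + u2 * Ts) < u2 * (gam + u1 * Ts)" using assms gam_pos by (simp add: algebra_simps)
  then show ?thesis using p by (simp add: divide_simps)
qed

lemma phi_pos: "0 < u \<Longrightarrow> u / (gam + u * Ts) > 0"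
  using Ts_props gam_pos by (auto intro!: divide_pos_pos add_pos_pos)

lemma th_step:
  assumes "d \<in> {1..D}" "k \<in> {1..n d - 1}"
  shows "th d (k+1) < th d k" "k \<in> {1..n d}" "k + 1 \<in> {1..n d}"
proof -
  show k: "k \<in> {1..n d}" "k + 1 \<in> {1..n d}" using assms by auto
  have "s d k < s d (k+1)" using s_mono assms k by auto
  then show "th d (k+1) < th d k" unfolding theta_def using lam_pos assms by simp
qed

lemma submod:
  assumes N: "open N" "xs \<in> N" and hs: "implicit_sol D m n s lam gam idx N xs Ts h"
    and c: "c \<in> {1..D}" "l \<in> {1..n c - 1}" and d: "d \<in> {1..D}" "k \<in> {1..n d - 1}"
  shows "partial (payoff s r lam gam h d (k+1)) xs (idx c (l+1))
             - partial (payoff s r lam gam h d k) xs (idx c (l+1))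
             - partial (payoff s r lam gam h d (k+1)) xs (idx c l)
             + partial (payoff s r lam gam h d k) xs (idx c l) \<le> 0"
proof -
  note tc = th_step[OF c] and td = th_step[OF d]
  define G where "G = (\<lambda>k. (1 - s d k) * th d k * gam / (gam + th d k * Ts)\<^sup>2)"
  define Q where "Q = (\<lambda>l. coef Ts c l)"
  define A where "A = Af Ts Ts xs"
  have Ts0: "Ts > 0" using Ts_props by simp
  have A0: "A < 0" unfolding A_def using Af_neg[of Ts Ts xs] Ts0 \<delta>0_pos by auto
  have P: "partial (payoff s r lam gam h d k') xs (idx c l') = G k' * Q l' / A"
    if "k' \<in> {1..n d}" "l' \<in> {1..n c}" for k' l'
    unfolding G_def Q_def A_def using partial_payoff[OF N hs c(1) that(2) d(1) that(1)] by simp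
  have e: "G (k+1) * Q (l+1) / A - G k * Q (l+1) / A - G (k+1) * Q l / A + G k * Q l / A
     = (G (k+1) - G k) * (Q (l+1) - Q l) / A"
    using A0 by (simp add: field_simps)
  have Gf: "G k' = gam / (lam * d) * (th d k' / (gam + th d k' * Ts))\<^sup>2" for k'
  proof -
    have L: "lam * real d \<noteq> 0" using d lam_pos by simp
    have s1: "1 - s d k' = th d k' / (lam * d)" unfolding theta_def using L by simp
    show ?thesis unfolding G_def s1 by (simp add: power_divide power2_eq_square mult_ac)
  qed
  have Qf: "Q l' = real c / db * (th c l' / (gam + th c l' * Ts))" for l'
    unfolding Q_def coef_def by simp
  have "th d (k+1) / (gam + th d (k+1) * Ts) < th d k / (gam + th d k * Ts)"
    using phi_mono td th_pos[OF d(1)] by auto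
  then have "(th d (k+1) / (gam + th d (k+1) * Ts))\<^sup>2 < (th d k / (gam + th d k * Ts))\<^sup>2"
    using phi_pos th_pos[OF d(1) td(3)] by (intro power_strict_mono) (auto intro: less_imp_le)
  then have "gam / (lam * d) * (th d (k+1) / (gam + th d (k+1) * Ts))\<^sup>2 < gam / (lam * d) * (th d k / (gam + th d k * Ts))\<^sup>2"
    by (rule mult_strict_left_mono) (use gam_pos lam_pos d in auto)
  then have g: "G (k+1) - G k < 0" unfolding Gf by linarith
  have "th c (l+1) / (gam + th c (l+1) * Ts) < th c l / (gam + th c l * Ts)"
    using phi_mono tc th_pos[OF c(1)] by auto
  then have "real c / db * (th c (l+1) / (gam + th c (l+1) * Ts)) < real c / db * (th c l / (gam + th c l * Ts))"
    by (rule mult_strict_left_mono) (use db_pos c in auto)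
  then have q: "Q (l+1) - Q l < 0" unfolding Qf by linarith
  have "(G (k+1) - G k) * (Q (l+1) - Q l) > 0" using g q by (simp add: mult_neg_neg)
  then have "(G (k+1) - G k) * (Q (l+1) - Q l) / A \<le> 0" using A0 by (simp add: divide_pos_neg less_imp_le)
  then show ?thesis using P td(2,3) tc(2,3) e by simp
qed

end

theorem theorem4:
  fixes D :: nat and m :: "nat \<Rightarrow> real" and n :: "nat \<Rightarrow> nat"
    and s :: "nat \<Rightarrow> nat \<Rightarrow> real" and lam gam r :: real
    and idx :: "nat \<Rightarrow> nat \<Rightarrow> 'i::finite" and xs :: "real ^ 'i"
  assumes D_pos: "D \<ge> 1"
    and m_range: "\<forall>d\<in>{1..D}. 0 < m d \<and> m d \<le> 1"
    and m_sum: "(\<Sum>d=1..D. m d) = 1"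
    and n_pos: "\<forall>d\<in>{1..D}. n d \<ge> 1"
    and s_range: "\<forall>d\<in>{1..D}. \<forall>i\<in>{1..n d}. 0 \<le> s d i \<and> s d i \<le> 1"
    and s_mono: "\<forall>d\<in>{1..D}. \<forall>i\<in>{1..n d}. \<forall>j\<in>{1..n d}. i < j \<longrightarrow> s d i < s d j"
    and idx_bij: "bij_betw (\<lambda>(d, i). idx d i) {(d, i). d \<in> {1..D} \<and> i \<in> {1..n d}} UNIV"
    and lam_pos: "lam > 0" and gam_pos: "gam > 0" and r_neg: "r < 0"
    and hyp: "\<forall>d\<in>{1..D}. \<forall>i\<in>{1..n d}. lam * real d * (1 - s d i) > gam"
    and xs_state: "social_state D m n idx xs"
  shows "(\<exists>DH. ((\<lambda>\<Theta>. Hfun D m n s lam gam idx \<Theta> xs) has_real_derivative DH)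
                   (at (Theta_bar D m n s lam gam idx xs)) \<and> DH < 0)
    \<and> (\<exists>N h. open N \<and> xs \<in> N \<and>
          implicit_sol D m n s lam gam idx N xs (Theta_bar D m n s lam gam idx xs) h \<and>
          (\<forall>g. implicit_sol D m n s lam gam idx N xs (Theta_bar D m n s lam gam idx xs) g
                \<longrightarrow> (\<forall>y\<in>N. g y = h y)))
    \<and> (\<forall>N h. open N \<and> xs \<in> N \<and>
          implicit_sol D m n s lam gam idx N xs (Theta_bar D m n s lam gam idx xs) h \<longrightarrow>
          (\<forall>d\<in>{1..D}. \<forall>c\<in>{1..D}. \<forall>k\<in>{1..n d - 1}. \<forall>l\<in>{1..n c - 1}.
             partial (payoff s r lam gam h d (k+1)) xs (idx c (l+1))
             - partial (payoff s r lam gam h d k) xs (idx c (l+1))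
             - partial (payoff s r lam gam h d (k+1)) xs (idx c l)
             + partial (payoff s r lam gam h d k) xs (idx c l) \<le> 0))"
proof -
  have "S4 D m n s lam gam idx xs" unfolding S4_def
    using D_pos m_range n_pos s_range lam_pos gam_pos hyp xs_state s_mono idx_bij by blast
  then interpret S4 D m n s lam gam idx xs .
  have TB: "Theta_bar D m n s lam gam idx xs = Ts" by (simp add: Ts_def)
  have P1: "\<exists>DH. ((\<lambda>\<Theta>. Hfun D m n s lam gam idx \<Theta> xs) has_real_derivative DH) (at Ts) \<and> DH < 0"
    using H_deriv[OF Ts_props(1), of xs] Af_neg(2)[of Ts Ts xs] Ts_props \<delta>0_pos by auto
  have IS: "implicit_sol D m n s lam gam idx NN xs Ts hh"
    unfolding implicit_sol_def
    using hh_deriv hp_cont hh_props hh_xs by blast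
  have UQ: "\<forall>g. implicit_sol D m n s lam gam idx NN xs Ts g \<longrightarrow> (\<forall>y\<in>NN. g y = hh y)"
  proof (intro allI impI ballI)
    fix g y assume g: "implicit_sol D m n s lam gam idx NN xs Ts g" and y: "y \<in> NN"
    then have "g y > 0" "H (g y) y = 0" unfolding implicit_sol_def by auto
    then show "g y = hh y" using root_unique[OF NN_norm[OF y], of "g y" "hh y"] hh_props[OF y] by auto
  qed
  have P3: "\<forall>N h. open N \<and> xs \<in> N \<and> implicit_sol D m n s lam gam idx N xs Ts h \<longrightarrow>
          (\<forall>d\<in>{1..D}. \<forall>c\<in>{1..D}. \<forall>k\<in>{1..n d - 1}. \<forall>l\<in>{1..n c - 1}.
             partial (payoff s r lam gam h d (k+1)) xs (idx c (l+1))
             - partial (payoff s r lam gam h d k) xs (idx c (l+1))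
             - partial (payoff s r lam gam h d (k+1)) xs (idx c l)
             + partial (payoff s r lam gam h d k) xs (idx c l) \<le> 0)"
    using submod by blast
  show ?thesis unfolding TB using P1 IS UQ P3 NN_open xs_NN by blast
qed

end
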